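(* Let $k\ge 2$ be an even integer and let $f:\{0,1\}^d\to\{0,1\}$ be $\varepsilon$-far from linear. If $x_1,\dots,x_k$ are sampled uniformly and independently from $\{0,1\}^d$, then $$\Pr\Big[\sum_{i=1}^k f(x_i)\neq f(x_1\oplus\cdots\oplus x_k)\Big]\ge\varepsilon,$$ where the sum on the left is taken mod 2.
   Context: $\oplus$ denotes bitwise XOR. A function $f:\{0,1\}^d\to\{0,1\}$ is linear if there is $S\subseteq[d]$ with $f(x)=\sum_{i\in S}x[i]\bmod 2$ for all $x$. $f$ is $\varepsilon$-far from linear if $f$ differs from every linear function on at least an $\varepsilon$ fraction of $\{0,1\}^d$. *)

theory Defs
  imports "HOL-Probability.Probability"
begin

text \<open>The Boolean cube {0,1}^d: bit vectors are functions nat => bool, true = 1,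
  with all coordinates at index >= d equal to 0 (False).\<close>
definition cube :: "nat \<Rightarrow> (nat \<Rightarrow> bool) set" where
  "cube d = {x. \<forall>i. d \<le> i \<longrightarrow> \<not> x i}"

definition bxor :: "(nat \<Rightarrow> bool) \<Rightarrow> (nat \<Rightarrow> bool) \<Rightarrow> (nat \<Rightarrow> bool)" where
  "bxor x y = (\<lambda>i. x i \<noteq> y i)"

definition bxor_list :: "nat \<Rightarrow> (nat \<Rightarrow> nat \<Rightarrow> bool) \<Rightarrow> (nat \<Rightarrow> bool)" where
  "bxor_list k xs = foldr (\<lambda>j acc. bxor (xs j) acc) [0..<k] (\<lambda>_. False)"

definition lin_fun :: "nat set \<Rightarrow> (nat \<Rightarrow> bool) \<Rightarrow> bool" where
  "lin_fun S x = odd (card {i\<in>S. x i})"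

definition is_linear :: "nat \<Rightarrow> ((nat \<Rightarrow> bool) \<Rightarrow> bool) \<Rightarrow> bool" where
  "is_linear d f \<longleftrightarrow> (\<exists>S \<subseteq> {..<d}. \<forall>x\<in>cube d. f x = lin_fun S x)"

definition dist_frac :: "nat \<Rightarrow> ((nat \<Rightarrow> bool) \<Rightarrow> bool) \<Rightarrow> ((nat \<Rightarrow> bool) \<Rightarrow> bool) \<Rightarrow> real" where
  "dist_frac d f g = real (card {x\<in>cube d. f x \<noteq> g x}) / 2 ^ d"

definition far_from_linear :: "nat \<Rightarrow> real \<Rightarrow> ((nat \<Rightarrow> bool) \<Rightarrow> bool) \<Rightarrow> bool" where
  "far_from_linear d eps f \<longleftrightarrow>
     (\<forall>S \<subseteq> {..<d}. dist_frac d f (lin_fun S) \<ge> eps)"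

definition tuples :: "nat \<Rightarrow> nat \<Rightarrow> (nat \<Rightarrow> nat \<Rightarrow> bool) set" where
  "tuples d k = PiE {..<k} (\<lambda>_. cube d)"

end

theory Submission
  imports Defs
begin

definition chi :: "nat set \<Rightarrow> (nat \<Rightarrow> bool) \<Rightarrow> real" where
  "chi S x = (\<Prod>i\<in>S. if x i then -1 else 1)"
definition FF :: "((nat \<Rightarrow> bool) \<Rightarrow> bool) \<Rightarrow> (nat \<Rightarrow> bool) \<Rightarrow> real" where
  "FF f x = (if f x then -1 else 1)"
definition fh :: "nat \<Rightarrow> ((nat \<Rightarrow> bool) \<Rightarrow> bool) \<Rightarrow> nat set \<Rightarrow> real" where
  "fh d f S = (\<Sum>x\<in>cube d. FF f x * chi S x) / 2^d"

lemma prod_sign: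
  assumes "finite A"
  shows "(\<Prod>i\<in>A. if P i then -1 else (1::real)) = (if odd (card {i\<in>A. P i}) then -1 else 1)"
  using assms
proof (induction A rule: finite_induct)
  case empty then show ?case by simp
next
  case (insert a A)
  have "{i\<in>insert a A. P i} = (if P a then insert a {i\<in>A. P i} else {i\<in>A. P i})" by auto
  with insert show ?case by auto
qed

lemma cube_bij: "bij_betw (\<lambda>x. {i. x i}) (cube d) (Pow {..<d})"
  unfolding bij_betw_def
proof
  show "inj_on (\<lambda>x. {i. x i}) (cube d)"
    by (rule inj_onI) (auto simp: fun_eq_iff)
  show "(\<lambda>x. {i. x i}) ` cube d = Pow {..<d}"
  proof
    show "(\<lambda>x. {i. x i}) ` cube d \<subseteq> Pow {..<d}"
      by (auto simp: cube_def not_le[symmetric])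
    show "Pow {..<d} \<subseteq> (\<lambda>x. {i. x i}) ` cube d"
    proof
      fix A assume "A \<in> Pow {..<d}"
      then have "(\<lambda>i. i \<in> A) \<in> cube d" "A = {i. (\<lambda>i. i \<in> A) i}" by (auto simp: cube_def)
      then show "A \<in> (\<lambda>x. {i. x i}) ` cube d" by blast
    qed
  qed
qed

lemma card_cube: "card (cube d) = 2^d"
  using bij_betw_same_card[OF cube_bij[of d]] by (simp add: card_Pow)

lemma finite_cube: "finite (cube d)"
  using bij_betw_finite[OF cube_bij[of d]] by simp

lemma chi_bxor: "finite S \<Longrightarrow> chi S (bxor x y) = chi S x * chi S y"
  unfolding chi_def bxor_def by (subst prod.distrib[symmetric]) (rule prod.cong, auto)

lemma bxor_cube: "x \<in> cube d \<Longrightarrow> y \<in> cube d \<Longrightarrow> bxor x y \<in> cube d"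
  by (auto simp: cube_def bxor_def)

lemma complete0:
  assumes "z \<in> cube d"
  shows "(\<Sum>S\<in>Pow {..<d}. chi S z) = (if \<forall>i<d. \<not> z i then 2^d else 0)"
proof -
  have "(\<Sum>S\<in>Pow {..<d}. chi S z) = (\<Prod>i<d. (if z i then -1 else 1) + 1)"
    by (subst prod_add) (auto simp: chi_def)
  also have "\<dots> = (if \<forall>i<d. \<not> z i then 2^d else 0)"
  proof (cases "\<forall>i<d. \<not> z i")
    case True then show ?thesis by simp
  next
    case False
    then obtain i where "i < d" "z i" by auto
    then show ?thesis by (subst prod_zero) auto
  qed
  finally show ?thesis .
qed

lemma complete:
  assumes "x \<in> cube d" "y \<in> cube d"
  shows "(\<Sum>S\<in>Pow {..<d}. chi S x * chi S y) = (if x = y then 2^d else 0)"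
proof -
  have "(\<Sum>S\<in>Pow {..<d}. chi S x * chi S y) = (\<Sum>S\<in>Pow {..<d}. chi S (bxor x y))"
    by (rule sum.cong) (auto simp: chi_bxor finite_subset)
  also have "\<dots> = (if x = y then 2^d else 0)"
    using complete0[OF bxor_cube[OF assms]] assms
    by (auto simp: bxor_def cube_def fun_eq_iff; metis not_le)
  finally show ?thesis .
qed

lemma expansion:
  assumes "x \<in> cube d"
  shows "(\<Sum>S\<in>Pow {..<d}. fh d f S * chi S x) = FF f x"
proof -
  have "(\<Sum>S\<in>Pow {..<d}. fh d f S * chi S x)
     = (\<Sum>y\<in>cube d. FF f y * (\<Sum>S\<in>Pow {..<d}. chi S y * chi S x)) / 2^d"
    unfolding fh_def
    by (simp add: sum_divide_distrib sum_distrib_left sum_distrib_right mult.assoc)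
       (rule sum.swap)
  also have "\<dots> = (\<Sum>y\<in>cube d. (if y = x then FF f y * 2^d else 0)) / 2^d"
    by (rule arg_cong[where f="\<lambda>t. t / 2^d"], rule sum.cong) (auto simp: complete assms)
  also have "\<dots> = FF f x" using assms finite_cube by simp
  finally show ?thesis .
qed

lemma parseval: "(\<Sum>S\<in>Pow {..<d}. (fh d f S)^2) = 1"
proof -
  have "(\<Sum>S\<in>Pow {..<d}. (fh d f S)^2)
     = (\<Sum>y\<in>cube d. FF f y * (\<Sum>S\<in>Pow {..<d}. fh d f S * chi S y)) / 2^d"
    unfolding power2_eq_square
    apply (subst (2) fh_def)
    by (simp add: sum_divide_distrib sum_distrib_left sum_distrib_right mult_ac)
       (rule sum.swap)
  also have "\<dots> = (\<Sum>y\<in>cube d. FF f y * FF f y) / 2^d"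
    by (simp add: expansion)
  also have "\<dots> = (\<Sum>y\<in>cube d. 1) / 2^d" by (rule arg_cong[where f="\<lambda>t. t / 2^d"], rule sum.cong) (auto simp: FF_def)
  also have "\<dots> = 1" by (simp add: card_cube)
  finally show ?thesis .
qed

lemma fh_dist:
  assumes "S \<subseteq> {..<d}"
  shows "fh d f S = 1 - 2 * dist_frac d f (lin_fun S)"
proof -
  have fS: "finite S" using assms finite_subset by blast
  have chi_lin: "chi S x = (if lin_fun S x then -1 else 1)" for x
    unfolding chi_def lin_fun_def using prod_sign[OF fS] by simp
  have "(\<Sum>x\<in>cube d. FF f x * chi S x) = (\<Sum>x\<in>cube d. 1 - 2 * (if f x \<noteq> lin_fun S x then 1 else 0))"
    by (rule sum.cong) (auto simp: FF_def chi_lin)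
  also have "\<dots> = real (card (cube d)) - 2 * real (card {x\<in>cube d. f x \<noteq> lin_fun S x})"
    by (simp add: sum_subtractf sum_distrib_left[symmetric] sum.inter_filter[symmetric] finite_cube)
  finally show ?thesis
    unfolding fh_def dist_frac_def card_cube by (simp add: diff_divide_distrib)
qed

lemma chi_foldr:
  "finite S \<Longrightarrow> chi S (foldr (\<lambda>j acc. bxor (xs j) acc) l z) = prod_list (map (\<lambda>j. chi S (xs j)) l) * chi S z"
  by (induction l) (auto simp: chi_bxor)

lemma cube_foldr:
  "(\<And>j. j \<in> set l \<Longrightarrow> xs j \<in> cube d) \<Longrightarrow> z \<in> cube d \<Longrightarrow> foldr (\<lambda>j acc. bxor (xs j) acc) l z \<in> cube d"
  by (induction l) (auto simp: bxor_cube)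

lemma chi_false: "chi S (\<lambda>_. False) = 1"
  by (simp add: chi_def)

lemma chi_bxor_list: "finite S \<Longrightarrow> chi S (bxor_list k xs) = (\<Prod>i<k. chi S (xs i))"
  unfolding bxor_list_def
  by (simp add: chi_foldr chi_false prod.distinct_set_conv_list[symmetric] atLeast0LessThan)

lemma cube_bxor_list: "(\<And>i. i < k \<Longrightarrow> xs i \<in> cube d) \<Longrightarrow> bxor_list k xs \<in> cube d"
  unfolding bxor_list_def by (rule cube_foldr) (auto simp: cube_def)

lemma ineq:
  fixes a :: "nat set \<Rightarrow> real"
  assumes P: "finite P" "{} \<in> P" and sq: "(\<Sum>S\<in>P. (a S)^2) = 1"
    and le: "\<And>S. S \<in> P \<Longrightarrow> a S \<le> c" and s1: "(\<Sum>S\<in>P. a S) \<ge> -1"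
    and k: "even k" "k \<ge> 2"
  shows "(\<Sum>S\<in>P. (a S)^(k+1)) \<le> c"
proof -
  have ab: "\<bar>a S\<bar> \<le> 1" if "S \<in> P" for S
  proof -
    have "(a S)^2 \<le> 1" using member_le_sum[of S P "\<lambda>S. (a S)^2"] that P sq by simp
    then show ?thesis by (simp add: abs_square_le_1)
  qed
  obtain j where j: "k = Suc (Suc j)" using k by (metis add_2_eq_Suc le_Suc_ex)
  have oj: "odd (k+1)" using k by simp
  show ?thesis
  proof (cases "c \<ge> 0")
    case True
    have "(a S)^(k+1) \<le> c * (a S)^2" if "S \<in> P" for S
    proof (cases "a S > 0")
      case True
      have "(a S)^(Suc j) \<le> (a S)^1"
        using ab[OF that] True by (intro power_decreasing) auto
      also have "\<dots> \<le> c" using le[OF that] by simp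
      finally have "(a S)^2 * (a S)^(Suc j) \<le> (a S)^2 * c" by (simp add: mult_left_mono)
      moreover have "(a S)^(k+1) = (a S)^2 * (a S)^(Suc j)"
        unfolding j power2_eq_square by (simp only: Suc_eq_plus1[symmetric] power_Suc mult_ac)
      ultimately show ?thesis by (metis mult.commute)
    next
      case False
      then have "(a S)^(k+1) \<le> 0" using k(1) by (simp add: mult_nonpos_nonneg zero_le_even_power)
      also have "0 \<le> c * (a S)^2" using \<open>c \<ge> 0\<close> by simp
      finally show ?thesis .
    qed
    then have "(\<Sum>S\<in>P. (a S)^(k+1)) \<le> (\<Sum>S\<in>P. c * (a S)^2)" by (rule sum_mono)
    also have "\<dots> = c" using sq by (simp add: sum_distrib_left[symmetric])
    finally show ?thesis .
  next
    case False
    have neg: "a S < 0" if "S \<in> P" for S using le[OF that] False by simp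
    have "(\<Sum>S\<in>P. \<bar>a S\<bar> - (a S)^2) = - (\<Sum>S\<in>P. a S) - 1"
    proof -
      have "(\<Sum>S\<in>P. \<bar>a S\<bar>) = (\<Sum>S\<in>P. - a S)" by (rule sum.cong) (auto simp: abs_if dest: neg)
      then show ?thesis using sq by (simp add: sum_subtractf sum_negf)
    qed
    also have "\<dots> \<le> 0" using s1 by simp
    finally have le0: "(\<Sum>S\<in>P. \<bar>a S\<bar> - (a S)^2) \<le> 0" .
    have nn: "\<forall>S\<in>P. 0 \<le> \<bar>a S\<bar> - (a S)^2"
    proof
      fix S assume "S \<in> P"
      have "(a S)^2 = \<bar>a S\<bar> * \<bar>a S\<bar>" by (simp add: power2_eq_square)
      also have "\<dots> \<le> \<bar>a S\<bar> * 1" using ab[OF \<open>S \<in> P\<close>] by (intro mult_left_mono) auto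
      finally show "0 \<le> \<bar>a S\<bar> - (a S)^2" by simp
    qed
    have "(\<Sum>S\<in>P. \<bar>a S\<bar> - (a S)^2) = 0"
    proof -
      have "0 \<le> (\<Sum>S\<in>P. \<bar>a S\<bar> - (a S)^2)" using nn by (intro sum_nonneg) auto
      then show ?thesis using le0 by linarith
    qed
    then have z: "\<forall>S\<in>P. \<bar>a S\<bar> - (a S)^2 = 0" using sum_nonneg_eq_0_iff[OF P(1), of "\<lambda>S. \<bar>a S\<bar> - (a S)^2"] nn by simp
    have m1: "a S = -1" if "S \<in> P" for S
    proof -
      have "\<bar>a S\<bar> = (a S)*(a S)" using z that by (simp add: power2_eq_square)
      then have "-(a S) = (a S)*(a S)" using neg[OF that] by simp
      then have "a S * (a S + 1) = 0" by (simp add: algebra_simps)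
      then show ?thesis using neg[OF that] by simp
    qed
    have "(\<Sum>S\<in>P. (a S)^(k+1)) = (\<Sum>S\<in>P. -1)"
      by (rule sum.cong) (use m1 oj in \<open>auto simp: neg_one_odd_power\<close>)
    also have "\<dots> = - real (card P)" by simp
    also have "\<dots> \<le> -1"
    proof -
      have "0 < card P" using P card_gt_0_iff by blast
      then show ?thesis by simp
    qed
    also have "\<dots> \<le> c" using le[OF P(2)] m1[OF P(2)] by simp
    finally show ?thesis .
  qed
qed

theorem theorem1p2:
  fixes d k :: nat and eps :: real and f :: "(nat \<Rightarrow> bool) \<Rightarrow> bool"
  assumes "even k" and "k \<ge> 2"
    and "far_from_linear d eps f"
  shows "measure_pmf.prob (pmf_of_set (tuples d k))
           {xs. odd (card {i\<in>{..<k}. f (xs i)}) \<noteq> f (bxor_list k xs)} \<ge> eps"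
proof -
  define T where "T = tuples d k"
  define B where "B = {xs. odd (card {i\<in>{..<k}. f (xs i)}) \<noteq> f (bxor_list k xs)}"
  define P where "P = Pow {..<d}"
  define N :: real where "N = (2^d)^k"
  have fT: "finite T" unfolding T_def tuples_def by (simp add: finite_PiE finite_cube)
  have zc: "(\<lambda>_. False) \<in> cube d" by (simp add: cube_def)
  have neT: "T \<noteq> {}" unfolding T_def tuples_def using zc by (auto simp: PiE_eq_empty_iff)
  have cT: "real (card T) = N" unfolding T_def tuples_def N_def
    by (simp add: card_PiE card_cube)
  have Tc: "xs i \<in> cube d" if "xs \<in> T" "i < k" for xs i
    using that unfolding T_def tuples_def by auto
  have prodFF: "(\<Prod>i<k. FF f (xs i)) = (if odd (card {i\<in>{..<k}. f (xs i)}) then -1 else 1)" for xs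
    unfolding FF_def using prod_sign[of "{..<k}" "\<lambda>i. f (xs i)"] by simp
  have ind: "(if xs \<in> B then 1 else 0) = (1 - (\<Prod>i<k. FF f (xs i)) * FF f (bxor_list k xs)) / (2::real)" for xs
    unfolding prodFF B_def by (auto simp: FF_def)
  have "real (card (T \<inter> B)) = (\<Sum>xs\<in>T. if xs \<in> B then 1 else 0)"
    using fT by (simp add: sum.If_cases Int_def)
  also have "\<dots> = (\<Sum>xs\<in>T. (1 - (\<Prod>i<k. FF f (xs i)) * FF f (bxor_list k xs)) / 2)"
    by (simp add: ind)
  also have "\<dots> = (N - (\<Sum>xs\<in>T. (\<Prod>i<k. FF f (xs i)) * FF f (bxor_list k xs))) / 2"
    by (simp add: sum_divide_distrib[symmetric] sum_subtractf cT)
  finally have cB: "real (card (T \<inter> B)) = (N - (\<Sum>xs\<in>T. (\<Prod>i<k. FF f (xs i)) * FF f (bxor_list k xs))) / 2" .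
  have fP: "finite P" unfolding P_def by simp
  have fS: "finite S" if "S \<in> P" for S using that unfolding P_def by (auto intro: finite_subset)
  have "(\<Sum>xs\<in>T. (\<Prod>i<k. FF f (xs i)) * FF f (bxor_list k xs))
      = (\<Sum>xs\<in>T. (\<Prod>i<k. FF f (xs i)) * (\<Sum>S\<in>P. fh d f S * (\<Prod>i<k. chi S (xs i))))"
  proof (rule sum.cong)
    fix xs assume "xs \<in> T"
    then have "bxor_list k xs \<in> cube d" using Tc by (intro cube_bxor_list) auto
    then have "FF f (bxor_list k xs) = (\<Sum>S\<in>P. fh d f S * chi S (bxor_list k xs))"
      unfolding P_def by (simp add: expansion)
    also have "\<dots> = (\<Sum>S\<in>P. fh d f S * (\<Prod>i<k. chi S (xs i)))"
      by (rule sum.cong) (auto simp: chi_bxor_list fS)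
    finally show "(\<Prod>i<k. FF f (xs i)) * FF f (bxor_list k xs)
      = (\<Prod>i<k. FF f (xs i)) * (\<Sum>S\<in>P. fh d f S * (\<Prod>i<k. chi S (xs i)))" by simp
  qed simp
  also have "\<dots> = (\<Sum>S\<in>P. fh d f S * (\<Sum>xs\<in>T. (\<Prod>i<k. FF f (xs i) * chi S (xs i))))"
    by (simp add: sum_distrib_left sum_distrib_right prod.distrib mult_ac) (rule sum.swap)
  also have "\<dots> = (\<Sum>S\<in>P. fh d f S * (\<Prod>i<k. (\<Sum>x\<in>cube d. FF f x * chi S x)))"
    unfolding T_def tuples_def
    by (rule sum.cong[OF refl], subst prod_sum_PiE[of "{..<k}" "\<lambda>_. cube d" "\<lambda>i x. FF f x * chi _ x"])
       (auto simp: finite_cube)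
  also have "\<dots> = (\<Sum>S\<in>P. fh d f S * (2^d * fh d f S)^k)"
    by (simp add: fh_def)
  also have "\<dots> = N * (\<Sum>S\<in>P. (fh d f S)^(k+1))"
    unfolding N_def by (simp add: sum_distrib_left power_mult_distrib mult_ac)
  finally have W: "(\<Sum>xs\<in>T. (\<Prod>i<k. FF f (xs i)) * FF f (bxor_list k xs)) = N * (\<Sum>S\<in>P. (fh d f S)^(k+1))" .
  have Npos: "N > 0" unfolding N_def by simp
  have prob: "measure_pmf.prob (pmf_of_set T) B = (1 - (\<Sum>S\<in>P. (fh d f S)^(k+1))) / 2"
  proof -
    have "measure_pmf.prob (pmf_of_set T) B = (N - N * (\<Sum>S\<in>P. (fh d f S)^(k+1))) / 2 / N"
      using measure_pmf_of_set[OF neT fT, of B] cB W cT by simp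
    also have "\<dots> = (1 - (\<Sum>S\<in>P. (fh d f S)^(k+1))) / 2"
      using Npos by (simp add: field_simps)
    finally show ?thesis .
  qed
  have "(\<Sum>S\<in>P. (fh d f S)^(k+1)) \<le> 1 - 2 * eps"
  proof (rule ineq[OF fP])
    show "{} \<in> P" unfolding P_def by simp
    show "(\<Sum>S\<in>P. (fh d f S)^2) = 1" unfolding P_def by (rule parseval)
    show "fh d f S \<le> 1 - 2 * eps" if "S \<in> P" for S
      using that assms(3) fh_dist[of S d f] unfolding P_def far_from_linear_def by auto
    have "(\<Sum>S\<in>P. fh d f S) = (\<Sum>S\<in>P. fh d f S * chi S (\<lambda>_. False))" by (simp add: chi_false)
    also have "\<dots> = FF f (\<lambda>_. False)" unfolding P_def using zc by (rule expansion)
    finally show "(\<Sum>S\<in>P. fh d f S) \<ge> -1" by (simp add: FF_def)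
  qed (use assms in auto)
  then show ?thesis using prob unfolding T_def B_def by simp
qed

end
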